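(* Let $s_B(\theta|\mathcal{X})\in\mathbb{R}^d$ be a fixed (learned) approximation of the posterior score $\nabla_\theta\log p(\theta|\mathcal{X})$ with $\mathbb{E}\|s_B(\theta|\mathcal{X})\|_2^2<\infty$ and $\mathbb{E}\|\nabla_\theta\log p(\theta|\mathcal{X})\|_2^2<\infty$, and assume $F_B\neq 0$. Let $\mathcal{L}_B=\mathbb{E}_{\theta,\mathcal{X}}\|s_B(\theta|\mathcal{X})-\nabla_\theta\log p(\theta|\mathcal{X})\|_2^2$, $\mathrm{sRE}_B=\mathcal{L}_B/\mathrm{Tr}(F_B)$ and $d_B=\mathrm{intdim}(F_B)$. If $d_B\cdot\mathrm{sRE}_B\le 0.16$, then $$\frac{\|\bar F_B-F_B\|_2}{\|F_B\|_2}\le 2.4\sqrt{d_B\cdot\mathrm{sRE}_B}.$$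
   Context: Setup: $\theta\in\Theta\subseteq\mathbb{R}^d$ is a random parameter with prior density $p(\theta)$; given $\theta$, $\mathcal{X}=\{X_i\}_{i=1}^{n}$ are i.i.d. observations with density $p(x|\theta)$; $p(\theta|\mathcal{X})$ is the posterior. The Bayesian Fisher information matrix is $F_B=\mathbb{E}_{\theta,\mathcal{X}}[\nabla_\theta\log p(\theta|\mathcal{X})\nabla_\theta\log p(\theta|\mathcal{X})^T]$, and the learned Bayesian FIM is $\bar F_B=\mathbb{E}_{\theta,\mathcal{X}}[s_B(\theta|\mathcal{X})s_B(\theta|\mathcal{X})^T]$. For a nonzero positive semidefinite matrix $A$, $\mathrm{intdim}(A)=\mathrm{Tr}(A)/\|A\|_2$ (intrinsic dimension); $\|\cdot\|_2$ is the spectral norm. *)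

theory Defs
  imports "HOL-Analysis.Analysis" "HOL-Probability.Probability"
begin

definition mat_trace :: "real^'n^'n \<Rightarrow> real" where
  "mat_trace A = (\<Sum>i\<in>UNIV. A $ i $ i)"

definition spec_norm :: "real^'n^'m \<Rightarrow> real" where
  "spec_norm A = onorm (\<lambda>x. A *v x)"

definition intdim :: "real^'n^'n \<Rightarrow> real" where
  "intdim A = mat_trace A / spec_norm A"

text \<open>Second moment matrix E[v v^T] of a random vector v under M
  (F_B when v is the posterior score, bar F_B when v is the learned score).\<close>
definition second_moment :: "'w measure \<Rightarrow> ('w \<Rightarrow> real^'n) \<Rightarrow> real^'n^'n" where
  "second_moment M v = (\<chi> i j. \<integral>\<omega>. v \<omega> $ i * v \<omega> $ j \<partial>M)"

end

theory Submission
  imports Defs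
begin

lemma quad_cs:
  fixes A B C :: real
  assumes "\<And>t. 0 \<le> A - 2*t*C + t^2*B" "0 \<le> A" "0 \<le> B"
  shows "C^2 \<le> A*B"
proof (cases "B = 0")
  case True
  have "C = 0"
  proof (rule ccontr)
    assume "C \<noteq> 0"
    have "0 \<le> A - 2*((A+1)/(2*C))*C" using assms(1)[of "(A+1)/(2*C)"] True by simp
    then show False using \<open>C \<noteq> 0\<close> by (simp add: field_simps)
  qed
  then show ?thesis using True by simp
next
  case False
  then have Bp: "B > 0" using assms by simp
  have "0 \<le> A - 2*(C/B)*C + (C/B)^2*B" by (rule assms(1))
  also have "\<dots> = A - C^2/B" using Bp by (simp add: field_simps power2_eq_square)
  finally show ?thesis using Bp by (simp add: field_simps)
qed

lemma int_prod:
  fixes a b :: "'w \<Rightarrow> real"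
  assumes "a \<in> borel_measurable M" "b \<in> borel_measurable M"
    "integrable M (\<lambda>x. (a x)^2)" "integrable M (\<lambda>x. (b x)^2)"
  shows "integrable M (\<lambda>x. a x * b x)"
proof (rule Bochner_Integration.integrable_bound[where f="\<lambda>x. (a x)^2 + (b x)^2"])
  show "integrable M (\<lambda>x. (a x)^2 + (b x)^2)" using assms by simp
  show "(\<lambda>x. a x * b x) \<in> borel_measurable M" using assms by simp
  show "AE x in M. norm (a x * b x) \<le> norm ((a x)^2 + (b x)^2)"
  proof (rule AE_I2)
    fix x
    have "0 \<le> (\<bar>a x\<bar> - \<bar>b x\<bar>)^2" by simp
    then have "2 * (\<bar>a x\<bar> * \<bar>b x\<bar>) \<le> (a x)^2 + (b x)^2"
      by (simp add: power2_eq_square algebra_simps)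
    moreover have "0 \<le> \<bar>a x\<bar> * \<bar>b x\<bar>" by simp
    ultimately have "\<bar>a x\<bar> * \<bar>b x\<bar> \<le> (a x)^2 + (b x)^2" by linarith
    then have "\<bar>a x * b x\<bar> \<le> (a x)^2 + (b x)^2" by (simp add: abs_mult)
    then show "norm (a x * b x) \<le> norm ((a x)^2 + (b x)^2)" by simp
  qed
qed

lemma int_CS:
  fixes a b :: "'w \<Rightarrow> real"
  assumes "a \<in> borel_measurable M" "b \<in> borel_measurable M"
    "integrable M (\<lambda>x. (a x)^2)" "integrable M (\<lambda>x. (b x)^2)"
  shows "\<bar>\<integral>x. a x * b x \<partial>M\<bar> \<le> sqrt (\<integral>x. (a x)^2 \<partial>M) * sqrt (\<integral>x. (b x)^2 \<partial>M)"
proof -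
  have ab: "integrable M (\<lambda>x. a x * b x)" using int_prod[OF assms] .
  have "(\<integral>x. a x * b x \<partial>M)^2 \<le> (\<integral>x. (a x)^2 \<partial>M) * (\<integral>x. (b x)^2 \<partial>M)"
  proof (rule quad_cs)
    fix t
    have "0 \<le> (\<integral>x. (a x - t * b x)^2 \<partial>M)" by simp
    also have "(\<integral>x. (a x - t * b x)^2 \<partial>M) = (\<integral>x. (a x)^2 - 2*t*(a x * b x) + t^2 * (b x)^2 \<partial>M)"
      by (rule Bochner_Integration.integral_cong) (auto simp: power2_eq_square algebra_simps)
    also have "\<dots> = (\<integral>x. (a x)^2 \<partial>M) - 2*t*(\<integral>x. a x * b x \<partial>M) + t^2*(\<integral>x. (b x)^2 \<partial>M)"
      using assms ab by simp
    finally show "0 \<le> (\<integral>x. (a x)^2 \<partial>M) - 2*t*(\<integral>x. a x * b x \<partial>M) + t^2*(\<integral>x. (b x)^2 \<partial>M)" .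
  qed simp_all
  then have "sqrt ((\<integral>x. a x * b x \<partial>M)^2) \<le> sqrt ((\<integral>x. (a x)^2 \<partial>M) * (\<integral>x. (b x)^2 \<partial>M))"
    by (rule real_sqrt_le_mono)
  then show ?thesis by (simp add: real_sqrt_mult)
qed

lemma comp_meas:
  fixes v :: "'w \<Rightarrow> real^'d"
  assumes "v \<in> borel_measurable M"
  shows "(\<lambda>w. v w $ i) \<in> borel_measurable M"
  using measurable_compose[OF assms borel_measurable_nth] by simp

lemma comp_sq_int:
  fixes v :: "'w \<Rightarrow> real^'d"
  assumes "v \<in> borel_measurable M" "integrable M (\<lambda>w. (norm (v w))^2)"
  shows "integrable M (\<lambda>w. (v w $ i)^2)"
proof (rule Bochner_Integration.integrable_bound[OF assms(2)])
  show "(\<lambda>w. (v w $ i)^2) \<in> borel_measurable M" using comp_meas[OF assms(1)] by simp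
  show "AE x in M. norm ((v x $ i)^2) \<le> norm ((norm (v x))^2)"
  proof (intro AE_I2)
    fix x
    have "\<bar>v x $ i\<bar>^2 \<le> (norm (v x))^2"
      by (rule power_mono) (simp_all add: component_le_norm_cart)
    then show "norm ((v x $ i)^2) \<le> norm ((norm (v x))^2)" by simp
  qed
qed

lemma inner_sq_int:
  fixes v :: "'w \<Rightarrow> real^'d"
  assumes "v \<in> borel_measurable M" "integrable M (\<lambda>w. (norm (v w))^2)"
  shows "integrable M (\<lambda>w. (x \<bullet> v w)^2)"
proof (rule Bochner_Integration.integrable_bound[where f="\<lambda>w. (norm x)^2 * (norm (v w))^2"])
  show "integrable M (\<lambda>w. (norm x)^2 * (norm (v w))^2)" using assms by simp
  show "(\<lambda>w. (x \<bullet> v w)^2) \<in> borel_measurable M" using assms(1) by simp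
  show "AE w in M. norm ((x \<bullet> v w)^2) \<le> norm ((norm x)^2 * (norm (v w))^2)"
  proof (intro AE_I2)
    fix w
    have "\<bar>x \<bullet> v w\<bar> \<le> norm x * norm (v w)" by (rule Cauchy_Schwarz_ineq2)
    then have "\<bar>x \<bullet> v w\<bar>^2 \<le> (norm x * norm (v w))^2"
      by (rule power_mono) simp
    then show "norm ((x \<bullet> v w)^2) \<le> norm ((norm x)^2 * (norm (v w))^2)"
      by (simp add: power_mult_distrib)
  qed
qed

lemma inner_sq_le:
  fixes v :: "'w \<Rightarrow> real^'d"
  assumes "v \<in> borel_measurable M" "integrable M (\<lambda>w. (norm (v w))^2)"
  shows "(\<integral>w. (x \<bullet> v w)^2 \<partial>M) \<le> (norm x)^2 * (\<integral>w. (norm (v w))^2 \<partial>M)"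
proof -
  have "(\<integral>w. (x \<bullet> v w)^2 \<partial>M) \<le> (\<integral>w. (norm x)^2 * (norm (v w))^2 \<partial>M)"
  proof (rule integral_mono)
    show "integrable M (\<lambda>w. (x \<bullet> v w)^2)" by (rule inner_sq_int[OF assms])
    show "integrable M (\<lambda>w. (norm x)^2 * (norm (v w))^2)" using assms by simp
    fix w
    have "\<bar>x \<bullet> v w\<bar> \<le> norm x * norm (v w)" by (rule Cauchy_Schwarz_ineq2)
    then have "\<bar>x \<bullet> v w\<bar>^2 \<le> (norm x * norm (v w))^2"
      by (rule power_mono) simp
    then show "(x \<bullet> v w)^2 \<le> (norm x)^2 * (norm (v w))^2"
      by (simp add: power_mult_distrib)
  qed
  then show ?thesis by simp
qed

lemma sm_quad:
  fixes v :: "'w \<Rightarrow> real^'d"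
  assumes "v \<in> borel_measurable M" "integrable M (\<lambda>w. (norm (v w))^2)"
  shows "x \<bullet> (second_moment M v *v y) = (\<integral>w. (x \<bullet> v w) * (y \<bullet> v w) \<partial>M)"
proof -
  have ij: "integrable M (\<lambda>w. v w $ i * v w $ j)" for i j
    by (rule int_prod[OF comp_meas[OF assms(1)] comp_meas[OF assms(1)]
          comp_sq_int[OF assms] comp_sq_int[OF assms]])
  have "x \<bullet> (second_moment M v *v y) =
      (\<Sum>i\<in>UNIV. \<Sum>j\<in>UNIV. x $ i * y $ j * (\<integral>w. v w $ i * v w $ j \<partial>M))"
    by (simp add: inner_vec_def matrix_vector_mult_def second_moment_def sum_distrib_left
        algebra_simps)
  also have "\<dots> = (\<Sum>i\<in>UNIV. \<Sum>j\<in>UNIV. (\<integral>w. x $ i * y $ j * (v w $ i * v w $ j) \<partial>M))"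
    by simp
  also have "\<dots> = (\<Sum>i\<in>UNIV. (\<integral>w. (\<Sum>j\<in>UNIV. x $ i * y $ j * (v w $ i * v w $ j)) \<partial>M))"
    by (intro sum.cong refl Bochner_Integration.integral_sum[symmetric]) (simp add: ij)
  also have "\<dots> = (\<integral>w. (\<Sum>i\<in>UNIV. \<Sum>j\<in>UNIV. x $ i * y $ j * (v w $ i * v w $ j)) \<partial>M)"
    using Bochner_Integration.integral_sum[where I=UNIV and f="\<lambda>i w. \<Sum>j\<in>UNIV. x $ i * y $ j * (v w $ i * v w $ j)" and M=M]
    by (auto intro!: integrable_sum simp: ij)
  also have "\<dots> = (\<integral>w. (x \<bullet> v w) * (y \<bullet> v w) \<partial>M)"
    by (intro Bochner_Integration.integral_cong refl)
      (simp add: inner_vec_def sum_product algebra_simps)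
  finally show ?thesis .
qed

lemma bil_bound:
  fixes A :: "real^'d^'d"
  assumes "0 \<le> c" "\<And>x y. \<bar>x \<bullet> (A *v y)\<bar> \<le> c * norm x * norm y"
  shows "spec_norm A \<le> c"
  unfolding spec_norm_def
proof (rule onorm_le)
  fix y :: "real^'d"
  show "norm (A *v y) \<le> c * norm y"
  proof (cases "A *v y = 0")
    case True then show ?thesis using assms(1) by simp
  next
    case False
    then have p: "norm (A *v y) > 0" by simp
    have "norm (A *v y) * norm (A *v y) = (A *v y) \<bullet> (A *v y)"
      by (simp add: power2_norm_eq_inner[symmetric] power2_eq_square)
    also have "\<dots> \<le> c * norm (A *v y) * norm y" using assms(2)[of "A *v y" y] by simp
    finally have "norm (A *v y) * norm (A *v y) \<le> norm (A *v y) * (c * norm y)"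
      by (simp add: algebra_simps)
    then show ?thesis using p by simp
  qed
qed

lemma sq_diff_int:
  fixes a b :: "'w \<Rightarrow> real^'d"
  assumes "a \<in> borel_measurable M" "b \<in> borel_measurable M"
    "integrable M (\<lambda>w. (norm (a w))^2)" "integrable M (\<lambda>w. (norm (b w))^2)"
  shows "integrable M (\<lambda>w. (norm (a w - b w))^2)"
proof (rule Bochner_Integration.integrable_bound[where f="\<lambda>w. 2*(norm (a w))^2 + 2*(norm (b w))^2"])
  show "integrable M (\<lambda>w. 2*(norm (a w))^2 + 2*(norm (b w))^2)" using assms by simp
  show "(\<lambda>w. (norm (a w - b w))^2) \<in> borel_measurable M" using assms by simp
  show "AE w in M. norm ((norm (a w - b w))^2) \<le> norm (2*(norm (a w))^2 + 2*(norm (b w))^2)"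
  proof (intro AE_I2)
    fix w
    have "norm (a w - b w) \<le> norm (a w) + norm (b w)" by (rule norm_triangle_ineq4)
    then have "(norm (a w - b w))^2 \<le> (norm (a w) + norm (b w))^2"
      by (rule power_mono) simp
    also have "\<dots> \<le> 2*(norm (a w))^2 + 2*(norm (b w))^2"
      using sum_squares_ge_zero[of "norm (a w) - norm (b w)" 0]
      by (simp add: power2_eq_square algebra_simps)
    finally show "norm ((norm (a w - b w))^2) \<le> norm (2*(norm (a w))^2 + 2*(norm (b w))^2)"
      by simp
  qed
qed

lemma cs_inner:
  fixes a b :: "'w \<Rightarrow> real^'d"
  assumes "a \<in> borel_measurable M" "b \<in> borel_measurable M"
    "integrable M (\<lambda>w. (norm (a w))^2)" "integrable M (\<lambda>w. (norm (b w))^2)"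
  shows "\<bar>\<integral>w. (x \<bullet> a w) * (y \<bullet> b w) \<partial>M\<bar> \<le> sqrt (\<integral>w. (x \<bullet> a w)^2 \<partial>M) * sqrt (\<integral>w. (y \<bullet> b w)^2 \<partial>M)"
  by (rule int_CS) (use assms inner_sq_int in auto)

lemma quad_le_spec:
  fixes v :: "'w \<Rightarrow> real^'d"
  assumes "v \<in> borel_measurable M" "integrable M (\<lambda>w. (norm (v w))^2)"
  shows "(\<integral>w. (y \<bullet> v w)^2 \<partial>M) \<le> spec_norm (second_moment M v) * (norm y)^2"
proof -
  have "(\<integral>w. (y \<bullet> v w)^2 \<partial>M) = y \<bullet> (second_moment M v *v y)"
    by (simp add: sm_quad[OF assms] power2_eq_square)
  also have "\<dots> \<le> norm y * norm (second_moment M v *v y)" by (rule norm_cauchy_schwarz)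
  also have "\<dots> \<le> norm y * (spec_norm (second_moment M v) * norm y)"
    unfolding spec_norm_def
    by (intro mult_left_mono onorm) simp_all
  finally show ?thesis by (simp add: power2_eq_square algebra_simps)
qed

theorem mainTheorem2:
  fixes M :: "'w measure"
    and sB :: "'w \<Rightarrow> real^'d"
    and score :: "'w \<Rightarrow> real^'d"
  assumes "prob_space M"
    and "sB \<in> borel_measurable M"
    and "score \<in> borel_measurable M"
    and "integrable M (\<lambda>\<omega>. (norm (sB \<omega>))\<^sup>2)"
    and "integrable M (\<lambda>\<omega>. (norm (score \<omega>))\<^sup>2)"
    and "second_moment M score \<noteq> 0"
    and "intdim (second_moment M score) *
           ((\<integral>\<omega>. (norm (sB \<omega> - score \<omega>))\<^sup>2 \<partial>M) / mat_trace (second_moment M score))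
         \<le> 0.16"
  shows "spec_norm (second_moment M sB - second_moment M score) / spec_norm (second_moment M score)
         \<le> 2.4 * sqrt (intdim (second_moment M score) *
              ((\<integral>\<omega>. (norm (sB \<omega> - score \<omega>))\<^sup>2 \<partial>M) / mat_trace (second_moment M score)))"
proof -
  define F where "F = second_moment M score"
  define G where "G = second_moment M sB"
  define e where "e = (\<lambda>w. sB w - score w)"
  define N where "N = spec_norm F"
  define T where "T = mat_trace F"
  define L where "L = (\<integral>w. (norm (e w))^2 \<partial>M)"
  define S where "S = (\<integral>w. (norm (score w))^2 \<partial>M)"
  have tm: "sB \<in> borel_measurable M" and sm: "score \<in> borel_measurable M"
    and ti: "integrable M (\<lambda>w. (norm (sB w))^2)" and si: "integrable M (\<lambda>w. (norm (score w))^2)"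
    using assms by auto
  have em: "e \<in> borel_measurable M" using tm sm unfolding e_def by simp
  have ei: "integrable M (\<lambda>w. (norm (e w))^2)" unfolding e_def by (rule sq_diff_int[OF tm sm ti si])
  have L0: "0 \<le> L" unfolding L_def by simp
  have S0: "0 \<le> S" unfolding S_def by simp
  have N0: "0 \<le> N" unfolding N_def spec_norm_def by (rule onorm_pos_le) simp
  have "\<exists>x. F *v x \<noteq> 0" using assms(6) unfolding F_def by (metis matrix_eq matrix_vector_mult_0)
  then have Npos: "N > 0" unfolding N_def spec_norm_def
    by (subst onorm_pos_lt) auto
  have "N \<le> S" unfolding N_def
  proof (rule bil_bound[OF S0])
    fix x y :: "real^'d"
    have "\<bar>x \<bullet> (F *v y)\<bar> = \<bar>\<integral>w. (x \<bullet> score w) * (y \<bullet> score w) \<partial>M\<bar>"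
      unfolding F_def by (simp add: sm_quad[OF sm si])
    also have "\<dots> \<le> sqrt (\<integral>w. (x \<bullet> score w)^2 \<partial>M) * sqrt (\<integral>w. (y \<bullet> score w)^2 \<partial>M)"
      by (rule cs_inner[OF sm sm si si])
    also have "\<dots> \<le> sqrt ((norm x)^2 * S) * sqrt ((norm y)^2 * S)"
      unfolding S_def
      by (intro mult_mono real_sqrt_le_mono inner_sq_le[OF sm si]) simp_all
    also have "\<dots> = S * norm x * norm y" using S0
      by (simp add: real_sqrt_mult)
    finally show "\<bar>x \<bullet> (F *v y)\<bar> \<le> S * norm x * norm y" .
  qed
  have "T = S"
  proof -
    have ii: "integrable M (\<lambda>w. score w $ i * score w $ i)" for i
      using comp_sq_int[OF sm si, of i] by (simp add: power2_eq_square)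
    have "T = (\<Sum>i\<in>UNIV. \<integral>w. score w $ i * score w $ i \<partial>M)"
      unfolding T_def F_def mat_trace_def second_moment_def by simp
    also have "\<dots> = (\<integral>w. (\<Sum>i\<in>UNIV. score w $ i * score w $ i) \<partial>M)"
      using Bochner_Integration.integral_sum[where I=UNIV and f="\<lambda>i w. score w $ i * score w $ i" and M=M] ii
      by simp
    also have "\<dots> = S" unfolding S_def
      by (intro Bochner_Integration.integral_cong refl) (simp add: power2_norm_eq_inner inner_vec_def)
    finally show ?thesis .
  qed
  with \<open>N \<le> S\<close> Npos have Tpos: "T > 0" by simp
  define c where "c = 2 * sqrt (L * N) + L"
  have c0: "0 \<le> c" unfolding c_def using L0 N0 by simp
  have key: "spec_norm (G - F) \<le> c"
  proof (rule bil_bound[OF c0])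
    fix x y :: "real^'d"
    define xe where "xe = (\<lambda>w. x \<bullet> e w)"
    define ye where "ye = (\<lambda>w. y \<bullet> e w)"
    define xs where "xs = (\<lambda>w. x \<bullet> score w)"
    define ys where "ys = (\<lambda>w. y \<bullet> score w)"
    have m: "xe \<in> borel_measurable M" "ye \<in> borel_measurable M" "xs \<in> borel_measurable M" "ys \<in> borel_measurable M"
      unfolding xe_def ye_def xs_def ys_def using em sm by simp_all
    have q: "integrable M (\<lambda>w. (xe w)^2)" "integrable M (\<lambda>w. (ye w)^2)"
         "integrable M (\<lambda>w. (xs w)^2)" "integrable M (\<lambda>w. (ys w)^2)"
      unfolding xe_def ye_def xs_def ys_def using inner_sq_int[OF em ei] inner_sq_int[OF sm si] by simp_all
    have p1: "integrable M (\<lambda>w. xe w * ys w)" by (rule int_prod) (use m q in auto)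
    have p2: "integrable M (\<lambda>w. xs w * ye w)" by (rule int_prod) (use m q in auto)
    have p3: "integrable M (\<lambda>w. xe w * ye w)" by (rule int_prod) (use m q in auto)
    have p4: "integrable M (\<lambda>w. xs w * ys w)" by (rule int_prod) (use m q in auto)
    have xt: "x \<bullet> sB w = xe w + xs w" "y \<bullet> sB w = ye w + ys w" for w
      unfolding xe_def ye_def xs_def ys_def e_def by (simp_all add: inner_diff_right)
    have "x \<bullet> ((G - F) *v y) = x \<bullet> (G *v y) - x \<bullet> (F *v y)"
      by (simp add: matrix_vector_mult_diff_rdistrib inner_diff_right)
    also have "\<dots> = (\<integral>w. (xe w + xs w) * (ye w + ys w) \<partial>M) - (\<integral>w. xs w * ys w \<partial>M)"
      unfolding G_def F_def sm_quad[OF tm ti] sm_quad[OF sm si] xt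
      by (simp add: xs_def ys_def)
    also have "(\<integral>w. (xe w + xs w) * (ye w + ys w) \<partial>M) =
        (\<integral>w. xe w * ys w + xs w * ye w + xe w * ye w + xs w * ys w \<partial>M)"
      by (intro Bochner_Integration.integral_cong refl) (simp add: algebra_simps)
    also have "\<dots> = (\<integral>w. xe w * ys w \<partial>M) + (\<integral>w. xs w * ye w \<partial>M) + (\<integral>w. xe w * ye w \<partial>M) + (\<integral>w. xs w * ys w \<partial>M)"
      using p1 p2 p3 p4 by simp
    finally have eq: "x \<bullet> ((G - F) *v y) = (\<integral>w. xe w * ys w \<partial>M) + (\<integral>w. xs w * ye w \<partial>M) + (\<integral>w. xe w * ye w \<partial>M)"
      by simp
    have bxe: "sqrt (\<integral>w. (xe w)^2 \<partial>M) \<le> norm x * sqrt L"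
    proof -
      have "sqrt (\<integral>w. (xe w)^2 \<partial>M) \<le> sqrt ((norm x)^2 * L)"
        unfolding xe_def L_def by (intro real_sqrt_le_mono inner_sq_le[OF em ei])
      then show ?thesis by (simp add: real_sqrt_mult)
    qed
    have bye: "sqrt (\<integral>w. (ye w)^2 \<partial>M) \<le> norm y * sqrt L"
    proof -
      have "sqrt (\<integral>w. (ye w)^2 \<partial>M) \<le> sqrt ((norm y)^2 * L)"
        unfolding ye_def L_def by (intro real_sqrt_le_mono inner_sq_le[OF em ei])
      then show ?thesis by (simp add: real_sqrt_mult)
    qed
    have bxs: "sqrt (\<integral>w. (xs w)^2 \<partial>M) \<le> norm x * sqrt N"
    proof -
      have "sqrt (\<integral>w. (xs w)^2 \<partial>M) \<le> sqrt (N * (norm x)^2)"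
        unfolding xs_def N_def F_def by (intro real_sqrt_le_mono quad_le_spec[OF sm si])
      then show ?thesis by (simp add: real_sqrt_mult mult.commute)
    qed
    have bys: "sqrt (\<integral>w. (ys w)^2 \<partial>M) \<le> norm y * sqrt N"
    proof -
      have "sqrt (\<integral>w. (ys w)^2 \<partial>M) \<le> sqrt (N * (norm y)^2)"
        unfolding ys_def N_def F_def by (intro real_sqrt_le_mono quad_le_spec[OF sm si])
      then show ?thesis by (simp add: real_sqrt_mult mult.commute)
    qed
    have a1: "\<bar>\<integral>w. xe w * ys w \<partial>M\<bar> \<le> (norm x * sqrt L) * (norm y * sqrt N)"
      by (rule order_trans[OF int_CS[OF m(1) m(4) q(1) q(4)]]) (rule mult_mono[OF bxe bys], simp_all add: L0 N0)
    have a2: "\<bar>\<integral>w. xs w * ye w \<partial>M\<bar> \<le> (norm x * sqrt N) * (norm y * sqrt L)"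
      by (rule order_trans[OF int_CS[OF m(3) m(2) q(3) q(2)]]) (rule mult_mono[OF bxs bye], simp_all add: L0 N0)
    have a3: "\<bar>\<integral>w. xe w * ye w \<partial>M\<bar> \<le> (norm x * sqrt L) * (norm y * sqrt L)"
      by (rule order_trans[OF int_CS[OF m(1) m(2) q(1) q(2)]]) (rule mult_mono[OF bxe bye], simp_all add: L0 N0)
    have "\<bar>x \<bullet> ((G - F) *v y)\<bar> \<le> (norm x * sqrt L) * (norm y * sqrt N) + (norm x * sqrt N) * (norm y * sqrt L) + (norm x * sqrt L) * (norm y * sqrt L)"
      unfolding eq using a1 a2 a3 by linarith
    also have "\<dots> = c * norm x * norm y"
      unfolding c_def using L0 N0 by (simp add: real_sqrt_mult algebra_simps)
    finally show "\<bar>x \<bullet> ((G - F) *v y)\<bar> \<le> c * norm x * norm y" .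
  qed
  have ratio: "intdim F * (L / T) = L / N"
    unfolding intdim_def using Tpos Npos by (simp add: T_def N_def)
  define r where "r = sqrt (L / N)"
  have r0: "0 \<le> r" unfolding r_def using L0 Npos by (simp add: divide_nonneg_pos)
  have rr: "r^2 = L / N" unfolding r_def using L0 Npos by (simp add: divide_nonneg_pos)
  have A7: "intdim F * (L / T) \<le> 0.16" using assms(7) unfolding F_def L_def e_def T_def .
  have "r^2 \<le> 0.16" using A7 unfolding ratio rr .
  then have "r^2 \<le> 0.4^2" by (simp add: power2_eq_square)
  then have r4: "r \<le> 0.4" by (rule power2_le_imp_le) simp
  have Lr: "L = r^2 * N" using rr Npos by simp
  have sLN: "sqrt (L * N) = r * N"
  proof -
    have h: "L * N = (r * N)^2" unfolding Lr by (simp add: power2_eq_square)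
    have "sqrt (L * N) = sqrt ((r * N)^2)" by (simp only: h)
    also have "\<dots> = \<bar>r * N\<bar>" by (rule real_sqrt_abs)
    also have "\<dots> = r * N" using r0 N0 by simp
    finally show ?thesis .
  qed
  have "spec_norm (G - F) / N \<le> c / N" using key Npos by (simp add: divide_right_mono)
  also have "c / N = 2 * r + r^2"
  proof -
    have "c = 2 * (r * N) + L" unfolding c_def sLN ..
    also have "\<dots> = (2 * r + r^2) * N" unfolding Lr by (simp add: algebra_simps)
    finally show ?thesis using Npos by simp
  qed
  also have "\<dots> \<le> 2.4 * r"
  proof -
    have "r * r \<le> 0.4 * r" by (rule mult_right_mono[OF r4 r0])
    then show ?thesis by (simp add: power2_eq_square)
  qed
  finally show ?thesis
    unfolding r_def ratio[symmetric] using F_def G_def N_def L_def e_def T_def by simp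
qed

end
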